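(* Consider the Qs predictor with queue capacity $\mathrm{qcap}\ge2$ processing an arbitrary sequence of items. For any item $i$ with a queue $q(i)$ (so $|q(i)|\le\mathrm{qcap}$), let $Y_i:=\sum_{0\le j<|q(i)|}c_j-1$ and use the estimate $Q(i)=(|q(i)|-1)/Y_i$ (and $Q(i)=0$ when $|q(i)|\le1$ or $i$ has no queue). Then for every time $t\ge1$: (1) $Q^{(t)}(i)$, when nonzero, has the form $a/b$ with $a,b$ integers and $b\ge a\ge1$; (2) for an item $i$ with a queue at time $t$: if $i$ is not observed at time $t$, then $Y_i^{(t+1)}=Y_i^{(t)}+1$ or $i$ is removed from the queue map; if $i$ is observed at time $t$, then $Y_i^{(t+1)}\le Y_i^{(t)}$ when $|q^{(t)}(i)|=\mathrm{qcap}$, and $Y_i^{(t+1)}=Y_i^{(t)}+1$ when $|q^{(t)}(i)|<\mathrm{qcap}$; (3) if $i$ is observed at time $t$, then $Q^{(t+1)}(i)\ge Q^{(t)}(i)$; if $i$ is not observed at time $t$, then $Q^{(t+1)}(i)<Q^{(t)}(i)$ or $Q^{(t+1)}(i)=Q^{(t)}(i)=0$.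
   Context: The Qs predictor keeps a map from items to queues of positive integer counts ("cells"), the newest cell being $c_0$ ("cell0"), the older cells $c_1,c_2,\dots$; each queue holds at most $\mathrm{qcap}$ cells. At each time $t$, the predictor first outputs its estimates $Q^{(t)}$, then observes the item $o^{(t)}$ and updates: if $o^{(t)}$ has no queue, an empty queue is created for it; then the queue of $o^{(t)}$ receives a positive update (if it has fewer than $\mathrm{qcap}$ cells its size grows by one; all existing cells shift one position older, the oldest being discarded if the queue was at capacity; and a new cell $c_0=1$ is created), while every other existing queue receives a negative update (its $c_0$ is incremented by $1$). Occasionally (pruning) items may be removed from the map together with their queues. $q^{(t)}(i)$, $Y_i^{(t)}$ and $Q^{(t)}(i)$ denote the queue of $i$, the quantity $Y_i$, and the estimate at time $t$, i.e. before the update at time $t$. *)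

theory Defs
  imports Complex_Main
begin

text \<open>A queue is a list of positive counts, newest cell c0 first.
  The queue map is a partial map from items to queues.\<close>

type_synonym 'a qmap = "'a \<Rightarrow> nat list option"

definition neg_update :: "nat list \<Rightarrow> nat list" where
  "neg_update q = (case q of [] \<Rightarrow> [] | c # cs \<Rightarrow> Suc c # cs)"

definition pos_update :: "nat \<Rightarrow> nat list \<Rightarrow> nat list" where
  "pos_update qcap q = 1 # take (qcap - 1) q"

definition qs_update :: "nat \<Rightarrow> 'a \<Rightarrow> 'a qmap \<Rightarrow> 'a qmap" where
  "qs_update qcap ob M = (\<lambda>x. if x = ob
      then Some (pos_update qcap (case M ob of None \<Rightarrow> [] | Some q \<Rightarrow> q))
      else map_option neg_update (M x))"

definition Yval :: "nat list \<Rightarrow> int" where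
  "Yval q = int (sum_list q) - 1"

definition Qest :: "'a qmap \<Rightarrow> 'a \<Rightarrow> real" where
  "Qest M i = (case M i of None \<Rightarrow> 0
     | Some q \<Rightarrow> if length q \<le> 1 then 0
                 else (real (length q) - 1) / real_of_int (Yval q))"

text \<open>A run of the Qs predictor: S t is the queue map at time t (before the update
  at time t), starting empty at time 1; at each time t \<ge> 1 the observed item obs t
  is processed, then an arbitrary set P of items (not containing obs t) is pruned.\<close>
definition qs_run :: "nat \<Rightarrow> (nat \<Rightarrow> 'a) \<Rightarrow> (nat \<Rightarrow> 'a qmap) \<Rightarrow> bool" where
  "qs_run qcap obs S \<longleftrightarrow>
     S 1 = (\<lambda>_. None) \<and>
     (\<forall>t\<ge>1. \<exists>P. obs t \<notin> P \<and>
        S (Suc t) = (\<lambda>x. if x \<in> P then None else qs_update qcap (obs t) (S t) x))"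

end

theory Submission
  imports Defs
begin

definition good :: "nat \<Rightarrow> nat list \<Rightarrow> bool" where
  "good qcap q \<longleftrightarrow> q \<noteq> [] \<and> (\<forall>c\<in>set q. 1 \<le> c) \<and> length q \<le> qcap"

definition Qq :: "nat list \<Rightarrow> real" where
  "Qq q = (if length q \<le> 1 then 0 else (real (length q) - 1) / real_of_int (Yval q))"

lemma Qest_alt: "Qest M i = (case M i of None \<Rightarrow> 0 | Some q \<Rightarrow> Qq q)"
  unfolding Qest_def Qq_def by (simp split: option.splits)

lemma len_le_sum: "\<forall>c\<in>set q. 1 \<le> c \<Longrightarrow> length q \<le> sum_list (q::nat list)"
  by (induction q) auto

lemma Y_ge: "good qcap q \<Longrightarrow> int (length q) - 1 \<le> Yval q"
  using len_le_sum[of q] unfolding good_def Yval_def by auto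

lemma Qq_nonneg: "good qcap q \<Longrightarrow> Qq q \<ge> 0"
  using Y_ge[of qcap q] unfolding Qq_def by auto

lemma good_neg: "good qcap q \<Longrightarrow> good qcap (neg_update q) \<and> Yval (neg_update q) = Yval q + 1
   \<and> length (neg_update q) = length q"
  unfolding good_def neg_update_def Yval_def by (cases q) auto

lemma good_pos: "qcap \<ge> 2 \<Longrightarrow> (\<forall>c\<in>set q. 1 \<le> c) \<Longrightarrow> good qcap (pos_update qcap q)"
  unfolding good_def pos_update_def by (auto dest: in_set_takeD)

lemma pos_full: "qcap \<ge> 2 \<Longrightarrow> good qcap q \<Longrightarrow> length q = qcap \<Longrightarrow>
   Yval (pos_update qcap q) \<le> Yval q \<and> length (pos_update qcap q) = length q"
proof -
  assume a: "qcap \<ge> 2" "good qcap q" "length q = qcap"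
  then have ne: "q \<noteq> []" and pos: "\<forall>c\<in>set q. 1 \<le> c" unfolding good_def by auto
  have q: "q = butlast q @ [last q]" using ne by simp
  have "take (qcap - 1) q = butlast q" using a(3) by (simp add: butlast_conv_take)
  moreover have "sum_list q = sum_list (butlast q) + last q"
    by (subst q) simp
  moreover have "last q \<ge> 1" using pos ne by simp
  ultimately show ?thesis using a ne unfolding pos_update_def Yval_def by auto
qed

lemma pos_notfull: "length q < qcap \<Longrightarrow>
   Yval (pos_update qcap q) = Yval q + 1 \<and> length (pos_update qcap q) = Suc (length q)"
  unfolding pos_update_def Yval_def by auto

lemma step:
  assumes "qs_run qcap obs S" "t \<ge> 1"
  obtains P where "obs t \<notin> P"
    "S (Suc t) = (\<lambda>x. if x \<in> P then None else qs_update qcap (obs t) (S t) x)"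
  using assms unfolding qs_run_def by blast

lemma inv:
  assumes "qcap \<ge> 2" "qs_run qcap obs S" "t \<ge> 1"
  shows "S t i = Some q \<Longrightarrow> good qcap q"
  using assms(3)
proof (induction t arbitrary: i q rule: dec_induct)
  case base
  then show ?case using assms(2) unfolding qs_run_def by simp
next
  case (step n)
  obtain P where P: "obs n \<notin> P"
    "S (Suc n) = (\<lambda>x. if x \<in> P then None else qs_update qcap (obs n) (S n) x)"
    using Submission.step[OF assms(2)] step.hyps(1) assms(3) by (metis dual_order.trans)
  show ?case
  proof (cases "i = obs n")
    case True
    then have "q = pos_update qcap (case S n (obs n) of None \<Rightarrow> [] | Some q \<Rightarrow> q)"
      using step.prems P unfolding qs_update_def by auto
    moreover have "\<forall>c\<in>set (case S n (obs n) of None \<Rightarrow> [] | Some q \<Rightarrow> q). 1 \<le> c"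
      using step.IH unfolding good_def by (auto split: option.splits) (metis Suc_le_eq)
    ultimately show ?thesis using good_pos assms(1) by blast
  next
    case False
    then obtain q0 where "S n i = Some q0" "q = neg_update q0"
      using step.prems P unfolding qs_update_def by (auto split: if_splits)
    then show ?thesis using step.IH good_neg by blast
  qed
qed


lemma Qq_pos: assumes "qcap \<ge> 2" "good qcap q" shows "Qq q \<le> Qq (pos_update qcap q)"
proof -
  have Y: "int (length q) - 1 \<le> Yval q" using Y_ge assms(2) by blast
  have gp: "good qcap (pos_update qcap q)" using good_pos assms unfolding good_def by blast
  have Y': "int (length (pos_update qcap q)) - 1 \<le> Yval (pos_update qcap q)" using Y_ge gp by blast
  have nn: "Qq (pos_update qcap q) \<ge> 0" using Qq_nonneg gp by blast
  show ?thesis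
  proof (cases "length q \<le> 1")
    case True then show ?thesis using nn unfolding Qq_def by simp
  next
    case False
    have L: "length q \<le> qcap" using assms(2) unfolding good_def by simp
    show ?thesis
    proof (cases "length q = qcap")
      case True
      with pos_full[OF assms] have e: "Yval (pos_update qcap q) \<le> Yval q"
        "length (pos_update qcap q) = length q" by auto
      have "(real (length q) - 1) / real_of_int (Yval q) \<le> (real (length q) - 1) / real_of_int (Yval (pos_update qcap q))"
        apply (rule divide_left_mono) using e Y' False by auto
      then show ?thesis using False e unfolding Qq_def by simp
    next
      case nf: False
      with L have "length q < qcap" by simp
      from pos_notfull[OF this] have e: "Yval (pos_update qcap q) = Yval q + 1"
        "length (pos_update qcap q) = Suc (length q)" by auto
      define y where "y = real_of_int (Yval q)"
      define l where "l = real (length q)"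
      have y1: "l - 1 \<le> y" "l \<ge> 2" using Y False unfolding y_def l_def by auto
      have "(l - 1) / y \<le> l / (y + 1)" using y1 by (simp add: field_simps)
      moreover have "Qq q = (l - 1) / y" using False unfolding Qq_def y_def l_def by simp
      moreover have "Qq (pos_update qcap q) = l / (y + 1)" unfolding Qq_def e y_def l_def by simp
      ultimately show ?thesis by simp
    qed
  qed
qed

lemma Qq_neg: assumes "good qcap q"
  shows "Qq (neg_update q) < Qq q \<or> (Qq (neg_update q) = 0 \<and> Qq q = 0)"
proof -
  have Y: "int (length q) - 1 \<le> Yval q" using Y_ge assms by blast
  have e: "Yval (neg_update q) = Yval q + 1" "length (neg_update q) = length q"
    using good_neg assms by auto
  show ?thesis
  proof (cases "length q \<le> 1")
    case True then show ?thesis using e unfolding Qq_def by simp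
  next
    case False
    define y where "y = real_of_int (Yval q)"
    define l where "l = real (length q)"
    have y1: "l - 1 \<le> y" "l \<ge> 2" using Y False unfolding y_def l_def by auto
    have "(l - 1) / (y + 1) < (l - 1) / y" using y1 by (simp add: field_simps)
    then show ?thesis using False e unfolding Qq_def y_def l_def by simp
  qed
qed

theorem lemma13:
  fixes qcap :: nat and obs :: "nat \<Rightarrow> 'a" and S :: "nat \<Rightarrow> 'a qmap"
  assumes "qcap \<ge> 2"
    and "qs_run qcap obs S"
  shows "\<forall>t\<ge>1. \<forall>i.
     (Qest (S t) i \<noteq> 0 \<longrightarrow>
        (\<exists>a b :: int. Qest (S t) i = real_of_int a / real_of_int b \<and> 1 \<le> a \<and> a \<le> b))
   \<and> (\<forall>q. S t i = Some q \<longrightarrow>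
        (obs t \<noteq> i \<longrightarrow>
           S (Suc t) i = None \<or> (\<exists>q'. S (Suc t) i = Some q' \<and> Yval q' = Yval q + 1))
      \<and> (obs t = i \<longrightarrow>
           (\<exists>q'. S (Suc t) i = Some q' \<and>
              (length q = qcap \<longrightarrow> Yval q' \<le> Yval q) \<and>
              (length q < qcap \<longrightarrow> Yval q' = Yval q + 1))))
   \<and> (obs t = i \<longrightarrow> Qest (S (Suc t)) i \<ge> Qest (S t) i)
   \<and> (obs t \<noteq> i \<longrightarrow>
        Qest (S (Suc t)) i < Qest (S t) i \<or>
        (Qest (S (Suc t)) i = 0 \<and> Qest (S t) i = 0))" (is "\<forall>t\<ge>1. \<forall>i. ?G t i")
proof (intro allI impI)
  fix t :: nat and i assume t: "1 \<le> t"
  have gd: "\<And>j q. S t j = Some q \<Longrightarrow> good qcap q" using inv[OF assms t] by blast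
  have gd1: "\<And>j q. S (Suc t) j = Some q \<Longrightarrow> good qcap q" using inv[OF assms, of "Suc t"] t by simp
  have Qnn: "Qest (S t) i \<ge> 0" "Qest (S (Suc t)) i \<ge> 0"
    using gd gd1 Qq_nonneg unfolding Qest_alt by (auto split: option.splits) blast+
  obtain P where P: "obs t \<notin> P"
    "S (Suc t) = (\<lambda>x. if x \<in> P then None else qs_update qcap (obs t) (S t) x)"
    using step[OF assms(2) t] by blast
  have A: "Qest (S t) i \<noteq> 0 \<longrightarrow>
        (\<exists>a b :: int. Qest (S t) i = real_of_int a / real_of_int b \<and> 1 \<le> a \<and> a \<le> b)"
  proof
    assume nz: "Qest (S t) i \<noteq> 0"
    then obtain q where q: "S t i = Some q" unfolding Qest_alt by (auto split: option.splits)
    then have l: "length q > 1" using nz unfolding Qest_alt Qq_def by (auto split: if_splits)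
    have "int (length q) - 1 \<le> Yval q" using Y_ge gd q by blast
    moreover have "Qest (S t) i = real_of_int (int (length q) - 1) / real_of_int (Yval q)"
      using q l unfolding Qest_alt Qq_def by simp
    ultimately show "\<exists>a b :: int. Qest (S t) i = real_of_int a / real_of_int b \<and> 1 \<le> a \<and> a \<le> b"
      using l by (intro exI[of _ "int (length q) - 1"] exI[of _ "Yval q"]) auto
  qed
  show "?G t i"
  proof (cases "obs t = i")
    case True
    define q0 where "q0 = (case S t i of None \<Rightarrow> [] | Some q \<Rightarrow> q)"
    have S1: "S (Suc t) i = Some (pos_update qcap q0)"
      using P True unfolding qs_update_def q0_def by auto
    have B: "\<forall>q. S t i = Some q \<longrightarrow>
        (obs t \<noteq> i \<longrightarrow>
           S (Suc t) i = None \<or> (\<exists>q'. S (Suc t) i = Some q' \<and> Yval q' = Yval q + 1))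
      \<and> (obs t = i \<longrightarrow>
           (\<exists>q'. S (Suc t) i = Some q' \<and>
              (length q = qcap \<longrightarrow> Yval q' \<le> Yval q) \<and>
              (length q < qcap \<longrightarrow> Yval q' = Yval q + 1)))"
    proof (intro allI impI)
      fix q assume q: "S t i = Some q"
      then have "q0 = q" unfolding q0_def by simp
      then show "(obs t \<noteq> i \<longrightarrow>
           S (Suc t) i = None \<or> (\<exists>q'. S (Suc t) i = Some q' \<and> Yval q' = Yval q + 1))
      \<and> (obs t = i \<longrightarrow>
           (\<exists>q'. S (Suc t) i = Some q' \<and>
              (length q = qcap \<longrightarrow> Yval q' \<le> Yval q) \<and>
              (length q < qcap \<longrightarrow> Yval q' = Yval q + 1)))"
        using True S1 pos_full[OF assms(1) gd[OF q]] pos_notfull[of q qcap] by auto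
    qed
    have C: "Qest (S (Suc t)) i \<ge> Qest (S t) i"
    proof (cases "S t i")
      case None then show ?thesis using Qnn unfolding Qest_alt by simp
    next
      case (Some q)
      then have "q0 = q" unfolding q0_def by simp
      then show ?thesis using Some S1 Qq_pos[OF assms(1) gd[OF Some]] unfolding Qest_alt by simp
    qed
    show ?thesis using A B C True by blast
  next
    case False
    have S1: "S (Suc t) i = (if i \<in> P then None else map_option neg_update (S t i))"
      using P False unfolding qs_update_def by auto
    have B: "\<forall>q. S t i = Some q \<longrightarrow>
        (obs t \<noteq> i \<longrightarrow>
           S (Suc t) i = None \<or> (\<exists>q'. S (Suc t) i = Some q' \<and> Yval q' = Yval q + 1))
      \<and> (obs t = i \<longrightarrow>
           (\<exists>q'. S (Suc t) i = Some q' \<and>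
              (length q = qcap \<longrightarrow> Yval q' \<le> Yval q) \<and>
              (length q < qcap \<longrightarrow> Yval q' = Yval q + 1)))"
      using S1 False good_neg gd by auto
    have D: "Qest (S (Suc t)) i < Qest (S t) i \<or>
        (Qest (S (Suc t)) i = 0 \<and> Qest (S t) i = 0)"
    proof (cases "i \<in> P")
      case True
      then have "Qest (S (Suc t)) i = 0" using S1 unfolding Qest_alt by simp
      then show ?thesis using Qnn by auto
    next
      case nP: False
      show ?thesis
      proof (cases "S t i")
        case None then show ?thesis using S1 nP unfolding Qest_alt by simp
      next
        case (Some q)
        then show ?thesis using S1 nP Qq_neg[OF gd[OF Some]] unfolding Qest_alt by simp
      qed
    qed
    show ?thesis using A B D False by blast
  qed
qed

end
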